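(* Let $a,b$ be integers with $0<a<b$. Let $\Gamma_{a,b}=\{\gamma_1,\gamma_2,\gamma_3,\dots\}$ be the sequence produced by the greedy algorithm: $\gamma_1=a$, $\gamma_2=b$, and for $r\ge 3$, $\gamma_r$ is the smallest integer greater than $\gamma_{r-1}$ such that $\{\gamma_1,\dots,\gamma_r\}$ is dissociated. Then there is an integer $n_0=n_0(a,b)$ such that $\gamma_n = 2\gamma_{n-1}$ for all $n\ge n_0$.
   Context: A set $\mathcal S\subseteq\mathbb N$ is dissociated if all of its finite subsets have different sums; equivalently, any equality $\sum_{s\in\mathcal S}\varepsilon_s s=0$ with $\varepsilon_s\in\{-1,0,1\}$ and only finitely many $\varepsilon_s\neq 0$ forces all $\varepsilon_s=0$. *)

theory Defs
  imports Main
begin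

definition dissociated :: "nat set \<Rightarrow> bool" where
  "dissociated S \<longleftrightarrow>
     (\<forall>A B. A \<subseteq> S \<longrightarrow> B \<subseteq> S \<longrightarrow> finite A \<longrightarrow> finite B \<longrightarrow> \<Sum>A = \<Sum>B \<longrightarrow> A = B)"

fun greedy_list :: "nat \<Rightarrow> nat \<Rightarrow> nat \<Rightarrow> nat list" where
  "greedy_list a b 0 = [a, b]"
| "greedy_list a b (Suc n) =
     (let L = greedy_list a b n
      in L @ [LEAST x. last L < x \<and> dissociated (insert x (set L))])"

text \<open>gamma a b r is the r-th term (1-indexed, r \<ge> 1) of the greedy sequence.\<close>
definition gamma :: "nat \<Rightarrow> nat \<Rightarrow> nat \<Rightarrow> nat" where
  "gamma a b r = greedy_list a b r ! (r - 1)"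

end

theory Submission
  imports Defs
begin

definition dset :: "nat set \<Rightarrow> nat \<Rightarrow> bool" where
  "dset S k \<longleftrightarrow> (\<exists>A B. A \<subseteq> S \<and> B \<subseteq> S \<and> finite A \<and> finite B \<and> \<Sum>A = k + \<Sum>B)"

lemma dsetI: "A \<subseteq> S \<Longrightarrow> B \<subseteq> S \<Longrightarrow> finite A \<Longrightarrow> finite B \<Longrightarrow> \<Sum>A = k + \<Sum>B \<Longrightarrow> dset S k"
  unfolding dset_def by blast

lemma dset_mono: "dset S k \<Longrightarrow> S \<subseteq> T \<Longrightarrow> dset T k"
proof -
  assume "dset S k" and st: "S \<subseteq> T"
  then obtain A B where h: "A \<subseteq> S" "B \<subseteq> S" "finite A" "finite B" "\<Sum>A = k + \<Sum>B"
    unfolding dset_def by blast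
  have "A \<subseteq> T" "B \<subseteq> T" using h(1,2) st by auto
  thus ?thesis using h(3-5) by (intro dsetI)
qed

lemma dset_bound: "finite S \<Longrightarrow> dset S k \<Longrightarrow> k \<le> \<Sum>S"
proof -
  assume f: "finite S" and "dset S k"
  then obtain A B where "A \<subseteq> S" "B \<subseteq> S" "finite A" "finite B" "\<Sum>A = k + \<Sum>B"
    unfolding dset_def by blast
  moreover have "\<Sum>A \<le> \<Sum>S" by (rule sum_mono2[OF f \<open>A \<subseteq> S\<close>]) simp
  ultimately show ?thesis by linarith
qed

lemma dset_mem: "x \<in> S \<Longrightarrow> dset S x"
  by (rule dsetI[of "{x}" S "{}"]) auto

lemma dset_zero: "dset S 0"
  by (rule dsetI[of "{}" S "{}"]) auto

lemma dset_add: "dset S k \<Longrightarrow> y \<notin> S \<Longrightarrow> dset (insert y S) (k + y)"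
proof -
  assume "dset S k" "y \<notin> S"
  then obtain A B where h: "A \<subseteq> S" "B \<subseteq> S" "finite A" "finite B" "\<Sum>A = k + \<Sum>B"
    unfolding dset_def by blast
  have "y \<notin> A" using h \<open>y \<notin> S\<close> by blast
  hence e: "\<Sum>(insert y A) = (k + y) + \<Sum>B" using h(3,5) by simp
  have 1: "insert y A \<subseteq> insert y S" using h(1) by blast
  have 2: "B \<subseteq> insert y S" using h(2) by blast
  have 3: "finite (insert y A)" using h(3) by simp
  show ?thesis by (rule dsetI[OF 1 2 3 h(4) e])
qed

lemma dset_sub: "dset S k \<Longrightarrow> k \<le> y \<Longrightarrow> y \<notin> S \<Longrightarrow> dset (insert y S) (y - k)"
proof -
  assume "dset S k" "k \<le> y" "y \<notin> S"
  then obtain A B where h: "A \<subseteq> S" "B \<subseteq> S" "finite A" "finite B" "\<Sum>A = k + \<Sum>B"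
    unfolding dset_def by blast
  have "y \<notin> B" using h \<open>y \<notin> S\<close> by blast
  hence e: "\<Sum>(insert y B) = (y - k) + \<Sum>A" using h(4,5) \<open>k \<le> y\<close> by simp
  have 1: "insert y B \<subseteq> insert y S" using h(2) by blast
  have 2: "A \<subseteq> insert y S" using h(1) by blast
  have 3: "finite (insert y B)" using h(4) by simp
  show ?thesis by (rule dsetI[OF 1 2 3 h(3) e])
qed

lemma dset_insert_cases:
  assumes "dset (insert y S) k" "y \<notin> S"
  shows "dset S k \<or> dset S (k + y) \<or> (y \<le> k \<and> dset S (k - y)) \<or> (k \<le> y \<and> dset S (y - k))"
proof -
  obtain A B where h: "A \<subseteq> insert y S" "B \<subseteq> insert y S" "finite A" "finite B" "\<Sum>A = k + \<Sum>B"
    using assms unfolding dset_def by blast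
  define A' where "A' = A - {y}"
  define B' where "B' = B - {y}"
  have s: "A' \<subseteq> S" "B' \<subseteq> S" "finite A'" "finite B'" using h unfolding A'_def B'_def by auto
  have sa: "y \<in> A \<Longrightarrow> \<Sum>A = y + \<Sum>A'" unfolding A'_def by (rule sum.remove[OF h(3)])
  have sb: "y \<in> B \<Longrightarrow> \<Sum>B = y + \<Sum>B'" unfolding B'_def by (rule sum.remove[OF h(4)])
  have a0: "y \<notin> A \<Longrightarrow> A' = A" unfolding A'_def by auto
  have b0: "y \<notin> B \<Longrightarrow> B' = B" unfolding B'_def by auto
  consider "y \<in> A" "y \<in> B" | "y \<in> A" "y \<notin> B" | "y \<notin> A" "y \<in> B" | "y \<notin> A" "y \<notin> B" by blast
  thus ?thesis
  proof cases
    case 1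
    hence "\<Sum>A' = k + \<Sum>B'" using sa sb h(5) by simp
    hence "dset S k" by (rule dsetI[OF s])
    thus ?thesis by simp
  next
    case 2
    hence e: "y + \<Sum>A' = k + \<Sum>B'" using sa b0 h(5) by simp
    show ?thesis
    proof (cases "y \<le> k")
      case True
      hence "\<Sum>A' = (k - y) + \<Sum>B'" using e by simp
      hence "dset S (k - y)" by (rule dsetI[OF s])
      thus ?thesis using True by simp
    next
      case False
      hence "\<Sum>B' = (y - k) + \<Sum>A'" using e by simp
      hence "dset S (y - k)" by (rule dsetI[OF s(2) s(1) s(4) s(3)])
      thus ?thesis using False by simp
    qed
  next
    case 3
    hence "\<Sum>A' = (k + y) + \<Sum>B'" using a0 sb h(5) by simp
    hence "dset S (k + y)" by (rule dsetI[OF s])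
    thus ?thesis by simp
  next
    case 4
    hence "\<Sum>A' = k + \<Sum>B'" using a0 b0 h(5) by simp
    hence "dset S k" by (rule dsetI[OF s])
    thus ?thesis by simp
  qed
qed

lemma diss_insert_iff:
  assumes dS: "dissociated S" and xS: "x \<notin> S"
  shows "dissociated (insert x S) \<longleftrightarrow> \<not> dset S x"
proof
  assume d: "dissociated (insert x S)"
  show "\<not> dset S x"
  proof
    assume "dset S x"
    then obtain A B where h: "A \<subseteq> S" "B \<subseteq> S" "finite A" "finite B" "\<Sum>A = x + \<Sum>B"
      unfolding dset_def by blast
    have "x \<notin> B" using h xS by blast
    hence "\<Sum>(insert x B) = \<Sum>A" using h by simp
    have dk: "\<And>A B. A \<subseteq> insert x S \<Longrightarrow> B \<subseteq> insert x S \<Longrightarrow> finite A \<Longrightarrow> finite B \<Longrightarrow> \<Sum>A = \<Sum>B \<Longrightarrow> A = B"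
      using d unfolding dissociated_def by blast
    have 1: "A \<subseteq> insert x S" using h(1) by blast
    have 2: "insert x B \<subseteq> insert x S" using h(2) by blast
    have 3: "finite (insert x B)" using h(4) by simp
    have "A = insert x B" by (rule dk[OF 1 2 h(3) 3]) (use \<open>\<Sum>(insert x B) = \<Sum>A\<close> in simp)
    thus False using h xS by blast
  qed
next
  assume nd: "\<not> dset S x"
  show "dissociated (insert x S)"
    unfolding dissociated_def
  proof (intro allI impI)
    fix A B assume hA: "A \<subseteq> insert x S" and hB: "B \<subseteq> insert x S" and fA: "finite A"
      and fB: "finite B" and e: "\<Sum>A = \<Sum>B"
    have dk: "\<And>A B. A \<subseteq> S \<Longrightarrow> B \<subseteq> S \<Longrightarrow> finite A \<Longrightarrow> finite B \<Longrightarrow> \<Sum>A = \<Sum>B \<Longrightarrow> A = B"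
      using dS unfolding dissociated_def by blast
    define A' where "A' = A - {x}"
    define B' where "B' = B - {x}"
    have s: "A' \<subseteq> S" "B' \<subseteq> S" "finite A'" "finite B'" using hA hB fA fB unfolding A'_def B'_def by auto
    have sa: "x \<in> A \<Longrightarrow> \<Sum>A = x + \<Sum>A'" unfolding A'_def by (rule sum.remove[OF fA])
    have sb: "x \<in> B \<Longrightarrow> \<Sum>B = x + \<Sum>B'" unfolding B'_def by (rule sum.remove[OF fB])
    have a0: "x \<notin> A \<Longrightarrow> A' = A" unfolding A'_def by auto
    have b0: "x \<notin> B \<Longrightarrow> B' = B" unfolding B'_def by auto
    consider "x \<in> A" "x \<in> B" | "x \<in> A" "x \<notin> B" | "x \<notin> A" "x \<in> B" | "x \<notin> A" "x \<notin> B" by blast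
    thus "A = B"
    proof cases
      case 1
      hence "\<Sum>A' = \<Sum>B'" using sa sb e by simp
      hence "A' = B'" by (rule dk[OF s])
      thus ?thesis using 1 unfolding A'_def B'_def by blast
    next
      case 2
      hence "\<Sum>B' = x + \<Sum>A'" using sa b0 e by simp
      hence "dset S x" by (rule dsetI[OF s(2) s(1) s(4) s(3)])
      thus ?thesis using nd by blast
    next
      case 3
      hence "\<Sum>A' = x + \<Sum>B'" using a0 sb e by simp
      hence "dset S x" by (rule dsetI[OF s])
      thus ?thesis using nd by blast
    next
      case 4
      hence "A' = B'" using a0 b0 e by (intro dk[OF s]) simp
      thus ?thesis using a0 b0 4 by simp
    qed
  qed
qed

lemma diss_empty: "dissociated {}"
  unfolding dissociated_def by auto

definition gT :: "nat \<Rightarrow> nat \<Rightarrow> nat \<Rightarrow> nat set" where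
  "gT a b k = set (greedy_list a b k)"

definition gg :: "nat \<Rightarrow> nat \<Rightarrow> nat \<Rightarrow> nat" where
  "gg a b k = last (greedy_list a b k)"

lemma gl_Suc: "greedy_list a b (Suc k) =
   greedy_list a b k @ [LEAST x. gg a b k < x \<and> dissociated (insert x (gT a b k))]"
  by (simp add: Let_def gg_def gT_def)

declare greedy_list.simps(2)[simp del]

lemma gg_Suc: "gg a b (Suc k) = (LEAST x. gg a b k < x \<and> dissociated (insert x (gT a b k)))"
  by (simp add: gl_Suc gg_def)

lemma gT_Suc: "gT a b (Suc k) = insert (gg a b (Suc k)) (gT a b k)"
  by (simp add: gl_Suc gg_Suc gT_def)

lemma gT_fin: "finite (gT a b k)"
  by (simp add: gT_def)

lemma gl_len: "length (greedy_list a b k) = k + 2"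
  by (induction k) (auto simp: gl_Suc)

lemma gl_prefix: "i < length (greedy_list a b k) \<Longrightarrow> k \<le> m \<Longrightarrow> greedy_list a b m ! i = greedy_list a b k ! i"
proof (induction m)
  case 0
  thus ?case by simp
next
  case (Suc m)
  show ?case
  proof (cases "k = Suc m")
    case True thus ?thesis by simp
  next
    case False
    hence "k \<le> m" using Suc by simp
    hence "i < length (greedy_list a b m)" using Suc gl_len by (metis add_le_mono1 order_less_le_trans)
    thus ?thesis using Suc \<open>k \<le> m\<close> by (simp add: gl_Suc nth_append)
  qed
qed

lemma gamma_gg: "r \<ge> 2 \<Longrightarrow> gamma a b r = gg a b (r - 2)"
proof -
  assume r: "r \<ge> 2"
  have len: "length (greedy_list a b (r - 2)) = r" using gl_len r by simp
  have "gamma a b r = greedy_list a b r ! (r - 1)" by (simp add: gamma_def)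
  also have "\<dots> = greedy_list a b (r - 2) ! (r - 1)"
  proof -
    have "r - 1 < length (greedy_list a b (r - 2))" using len r by simp
    from gl_prefix[OF this, of r] show ?thesis by simp
  qed
  also have "\<dots> = gg a b (r - 2)"
  proof -
    have "greedy_list a b (r - 2) \<noteq> []" using len r by auto
    thus ?thesis unfolding gg_def by (simp add: last_conv_nth len)
  qed
  finally show ?thesis .
qed

context
  fixes a b :: nat
  assumes a0: "0 < a" and ab: "a < b"
begin

lemma base_diss: "dissociated {a, b}"
proof -
  have "dissociated (insert a {})"
    using diss_insert_iff[OF diss_empty, of a] dset_bound[of "{}" a] a0 by auto
  moreover have "\<not> dset {a} b" using dset_bound[of "{a}" b] ab by auto
  ultimately have "dissociated (insert b {a})"
    using diss_insert_iff[of "{a}" b] ab by auto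
  thus ?thesis by (simp add: insert_commute)
qed

lemma inv: "dissociated (gT a b k) \<and> (\<forall>z\<in>gT a b k. z \<le> gg a b k) \<and> gg a b k \<in> gT a b k
   \<and> gg a b k < gg a b (Suc k) \<and> dissociated (insert (gg a b (Suc k)) (gT a b k))"
proof (induction k)
  case 0
  have h0: "gT a b 0 = {a, b}" "gg a b 0 = b" by (simp_all add: gT_def gg_def)
  let ?S = "gT a b 0" and ?m = "gg a b 0"
  let ?P = "\<lambda>x. ?m < x \<and> dissociated (insert x ?S)"
  define x0 where "x0 = \<Sum>?S + ?m + 1"
  have "x0 \<notin> ?S" using h0 ab unfolding x0_def by auto
  moreover have "\<not> dset ?S x0"
  proof
    assume "dset ?S x0"
    from dset_bound[OF gT_fin this] show False unfolding x0_def by simp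
  qed
  ultimately have "?P x0" using diss_insert_iff[of ?S x0] base_diss h0 unfolding x0_def by auto
  hence "?P (gg a b (Suc 0))" unfolding gg_Suc by (rule LeastI)
  thus ?case using h0 base_diss ab by auto
next
  case (Suc k)
  let ?S = "gT a b (Suc k)" and ?m = "gg a b (Suc k)"
  have d: "dissociated ?S" using Suc by (simp add: gT_Suc)
  have le: "\<forall>z\<in>?S. z \<le> ?m" using Suc by (auto simp: gT_Suc)
  have mem: "?m \<in> ?S" by (simp add: gT_Suc)
  let ?P = "\<lambda>x. ?m < x \<and> dissociated (insert x ?S)"
  define x0 where "x0 = \<Sum>?S + ?m + 1"
  have "x0 \<notin> ?S" using le unfolding x0_def by fastforce
  moreover have "\<not> dset ?S x0"
  proof
    assume "dset ?S x0"
    from dset_bound[OF gT_fin this] show False unfolding x0_def by simp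
  qed
  ultimately have "?P x0" using diss_insert_iff[of ?S x0] d le unfolding x0_def by auto
  hence "?P (gg a b (Suc (Suc k)))" unfolding gg_Suc[of a b "Suc k"] by (rule LeastI)
  thus ?case using d le mem by auto
qed

lemma gg_less: "gg a b k < gg a b (Suc k)" using inv by blast
lemma gT_diss: "dissociated (gT a b k)" using inv by blast
lemma gT_le: "z \<in> gT a b k \<Longrightarrow> z \<le> gg a b k" using inv by blast
lemma gg_mem: "gg a b k \<in> gT a b k" using inv by blast

lemma gg_notin: "gg a b (Suc k) \<notin> gT a b k"
proof
  assume "gg a b (Suc k) \<in> gT a b k"
  hence "gg a b (Suc k) \<le> gg a b k" by (rule gT_le)
  thus False using gg_less[of k] by simp
qed

lemma gg_ge: "gg a b k \<ge> k + b"
proof (induction k)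
  case 0 thus ?case by (simp add: gg_def)
next
  case (Suc k) thus ?case using gg_less[of k] by simp
qed

lemma gT_sub: "gT a b k \<subseteq> gT a b (Suc k)" by (auto simp: gT_Suc)

lemma minimal: "gg a b k < j \<Longrightarrow> j < gg a b (Suc k) \<Longrightarrow> dset (gT a b k) j"
proof -
  assume h: "gg a b k < j" "j < gg a b (Suc k)"
  have "\<not> (gg a b k < j \<and> dissociated (insert j (gT a b k)))"
    using not_less_Least[of j "\<lambda>x. gg a b k < x \<and> dissociated (insert x (gT a b k))"] h
    unfolding gg_Suc by blast
  hence "\<not> dissociated (insert j (gT a b k))" using h by blast
  moreover have "j \<notin> gT a b k" using h gT_le by fastforce
  ultimately show ?thesis using diss_insert_iff[OF gT_diss] by blast
qed

lemma notd: "\<not> dset (gT a b k) (gg a b (Suc k))"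
  using diss_insert_iff[OF gT_diss gg_notin] inv by blast

lemma P1: "b \<le> j \<Longrightarrow> j < gg a b (Suc k) \<Longrightarrow> dset (gT a b k) j"
proof (induction k arbitrary: j)
  case 0
  have g0: "gg a b 0 = b" by (simp add: gg_def)
  show ?case
  proof (cases "j = b")
    case True thus ?thesis using gg_mem[of 0] g0 dset_mem by metis
  next
    case False thus ?thesis using 0 g0 minimal[of 0 j] by simp
  qed
next
  case (Suc k)
  show ?case
  proof (cases "j < gg a b (Suc k)")
    case True thus ?thesis using Suc dset_mono gT_sub by blast
  next
    case False
    show ?thesis
    proof (cases "j = gg a b (Suc k)")
      case True thus ?thesis using gg_mem dset_mem by metis
    next
      case False2: False
      thus ?thesis using False Suc.prems minimal[of "Suc k" j] by simp
    qed
  qed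
qed

lemma Q: "j \<le> gg a b (Suc k) - b \<Longrightarrow> dset (gT a b (Suc k)) j"
proof (cases "j = 0")
  case True thus ?thesis by (simp add: dset_zero)
next
  case False
  assume j: "j \<le> gg a b (Suc k) - b"
  let ?y = "gg a b (Suc k)"
  have yb: "?y \<ge> b" using gg_ge[of "Suc k"] by simp
  have "dset (gT a b k) (?y - j)" using P1[of "?y - j" k] j False yb by simp
  hence "dset (insert ?y (gT a b k)) (?y - (?y - j))"
    using dset_sub gg_notin by (metis diff_le_self)
  thus ?thesis using j yb by (simp add: gT_Suc)
qed

definition R :: "nat \<Rightarrow> bool" where
  "R k \<longleftrightarrow> (\<forall>j < gg a b (Suc k). dset (gT a b k) j)"

lemma R_start: "R (Suc b)"
  unfolding R_def
proof (intro allI impI)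
  fix j assume j: "j < gg a b (Suc (Suc b))"
  have g: "gg a b (Suc b) \<ge> Suc b + b" using gg_ge by blast
  show "dset (gT a b (Suc b)) j"
  proof (cases "j \<le> gg a b (Suc b) - b")
    case True thus ?thesis using Q by blast
  next
    case False thus ?thesis using P1[of j "Suc b"] j g by simp
  qed
qed

lemma R_step: "R k \<Longrightarrow> R (Suc k) \<and> 2 * gg a b (Suc k) \<le> gg a b (Suc (Suc k))"
proof -
  assume Rk: "R k"
  let ?y = "gg a b (Suc k)"
  have ypos: "?y > 0" using gg_ge[of "Suc k"] ab by simp
  have H: "dset (gT a b (Suc k)) j" if "j < 2 * ?y" for j
  proof (cases "j < ?y")
    case True thus ?thesis using Rk unfolding R_def using dset_mono gT_sub by blast
  next
    case False
    hence "dset (gT a b k) (j - ?y)" using Rk that unfolding R_def by simp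
    hence "dset (insert ?y (gT a b k)) (j - ?y + ?y)" using dset_add gg_notin by blast
    thus ?thesis using False by (simp add: gT_Suc)
  qed
  have two: "2 * ?y \<le> gg a b (Suc (Suc k))"
  proof (rule ccontr)
    assume "\<not> ?thesis"
    hence "dset (gT a b (Suc k)) (gg a b (Suc (Suc k)))" using H by simp
    thus False using notd by blast
  qed
  have "R (Suc k)" unfolding R_def
  proof (intro allI impI)
    fix j assume j: "j < gg a b (Suc (Suc k))"
    show "dset (gT a b (Suc k)) j"
    proof (cases "j \<le> ?y")
      case True thus ?thesis using H ypos by simp
    next
      case False thus ?thesis using minimal j by simp
    qed
  qed
  thus ?thesis using two by blast
qed

lemma R_all: "k \<ge> Suc b \<Longrightarrow> R k"
proof (induction k rule: dec_induct)
  case base thus ?case by (rule R_start)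
next
  case (step n) thus ?case using R_step by blast
qed

lemma double_ge: "m \<ge> Suc (Suc b) \<Longrightarrow> 2 * gg a b m \<le> gg a b (Suc m)"
proof -
  assume m: "m \<ge> Suc (Suc b)"
  then obtain k where k: "m = Suc k" "k \<ge> Suc b" by (metis Suc_le_D Suc_le_mono)
  thus ?thesis using R_step[OF R_all[OF k(2)]] by simp
qed

lemma sum_bound: "m \<ge> Suc (Suc b) \<Longrightarrow> \<Sum>(gT a b m) \<le> \<Sum>(gT a b (Suc (Suc b))) + gg a b (Suc m)"
proof (induction m rule: dec_induct)
  case base thus ?case by simp
next
  case (step n)
  have "\<Sum>(gT a b (Suc n)) = gg a b (Suc n) + \<Sum>(gT a b n)"
    using gT_fin gg_notin by (simp add: gT_Suc)
  moreover have "2 * gg a b (Suc n) \<le> gg a b (Suc (Suc n))" using double_ge step by simp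
  ultimately show ?case using step by simp
qed

lemma eventually_double:
  assumes m: "m \<ge> Suc (Suc b) + \<Sum>(gT a b (Suc (Suc b)))"
  shows "gg a b (Suc (Suc m)) = 2 * gg a b (Suc m)"
proof -
  let ?C = "\<Sum>(gT a b (Suc (Suc b)))"
  let ?y = "gg a b (Suc m)"
  have yC: "?y > ?C" using gg_ge[of "Suc m"] m by simp
  have sm: "\<Sum>(gT a b m) < 2 * ?y" using sum_bound[of m] m yC by simp
  have lower: "2 * ?y \<le> gg a b (Suc (Suc m))" using double_ge[of "Suc m"] m by simp
  have ny: "\<not> dset (gT a b m) ?y" using notd by blast
  have nd: "\<not> dset (insert ?y (gT a b m)) (2 * ?y)"
  proof
    assume "dset (insert ?y (gT a b m)) (2 * ?y)"
    from dset_insert_cases[OF this gg_notin]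
    show False
    proof (elim disjE conjE)
      assume "dset (gT a b m) (2 * ?y)"
      thus False using dset_bound[OF gT_fin] sm by fastforce
    next
      assume "dset (gT a b m) (2 * ?y + ?y)"
      thus False using dset_bound[OF gT_fin] sm by fastforce
    next
      assume "dset (gT a b m) (2 * ?y - ?y)"
      thus False using ny by simp
    next
      assume "2 * ?y \<le> ?y"
      thus False using yC by simp
    qed
  qed
  have notin: "2 * ?y \<notin> gT a b (Suc m)" using gT_le[of _ "Suc m"] yC by fastforce
  have "dissociated (insert (2 * ?y) (gT a b (Suc m)))"
    using diss_insert_iff[OF gT_diss notin] nd by (simp add: gT_Suc)
  moreover have "?y < 2 * ?y" using yC by simp
  ultimately have "gg a b (Suc (Suc m)) \<le> 2 * ?y"
    unfolding gg_Suc[of a b "Suc m"] by (intro Least_le) simp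
  thus ?thesis using lower by simp
qed

end

theorem theorem3:
  fixes a b :: nat
  assumes "0 < a" and "a < b"
  shows "\<exists>n0 \<ge> 2. \<forall>n \<ge> n0. gamma a b n = 2 * gamma a b (n - 1)"
proof -
  define M where "M = Suc (Suc b) + \<Sum>(gT a b (Suc (Suc b)))"
  show ?thesis
  proof (intro exI[of _ "M + 4"] conjI allI impI)
    fix n assume n: "M + 4 \<le> n"
    have e1: "n - 2 = Suc (Suc (n - 4))" using n by simp
    have "gamma a b n = gg a b (n - 2)" using n by (intro gamma_gg) simp
    also have "\<dots> = gg a b (Suc (Suc (n - 4)))" using e1 by simp
    also have "\<dots> = 2 * gg a b (Suc (n - 4))"
      using eventually_double[OF assms, of "n - 4"] n unfolding M_def by simp
    also have "gg a b (Suc (n - 4)) = gamma a b (n - 1)"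
    proof -
      have e2: "n - 1 - 2 = Suc (n - 4)" using n by simp
      have "gamma a b (n - 1) = gg a b (n - 1 - 2)" using n by (intro gamma_gg) simp
      thus ?thesis using e2 by simp
    qed
    finally show "gamma a b n = 2 * gamma a b (n - 1)" .
  qed simp
qed

end
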